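(* For all $n\ge2$ and $f_1,\dots,f_n:\mathscr{P}\to\mathbb{Q}$, $$f_1f_2\,|\,f_3\,|\,\cdots\,|\,f_n=f_1\,|\,f_2\,|\,\cdots\,|\,f_n+\sum_{A\sqcup B=\{3,\dots,n\}}\big(f_1\,|\,f_{A_1}\,|\,f_{A_2}\,|\,\cdots\big)\odot\big(f_2\,|\,f_{B_1}\,|\,f_{B_2}\,|\,\cdots\big),$$ where the sum is over ordered pairs $(A,B)$ of (possibly empty) disjoint sets with union $\{3,\dots,n\}$, $A_1,A_2,\dots$ enumerate the elements of $A$ and $B_1,B_2,\dots$ those of $B$, and a connected product with a single entry is that function itself.
   Context: $\mathscr{P}$ is the set of partitions. $f_1f_2$ is the pointwise product. Induced product: with $u_\lambda=\prod_{i:\lambda_i>0}u_{\lambda_i}$ and $\langle f\rangle_{\vec u}=\frac{\sum_\lambda f(\lambda)u_\lambda}{\sum_\lambda u_\lambda}\in\mathbb{Q}[[u_1,u_2,\dots]]$ (a linear bijection in $f$), $f\odot g$ is defined by $\langle f\odot g\rangle_{\vec u}=\langle f\rangle_{\vec u}\langle g\rangle_{\vec u}$. For functions $h_1,\dots,h_N$, the connected product is $h_1|\cdots|h_N=\sum_{\alpha\in\Pi(N)}\mu(\alpha,\mathbf{1})\bigodot_{C\in\alpha}h_C$, where $\Pi(N)$ is the set of set partitions of $\{1,\dots,N\}$, $\mu(\alpha,\mathbf{1})=(-1)^{\ell(\alpha)-1}(\ell(\alpha)-1)!$ with $\ell(\alpha)$ the number of blocks, and $h_C=\prod_{c\in C}h_c$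 (pointwise). *)

theory Defs
  imports Complex_Main "HOL-Library.Multiset" "HOL-Library.Disjoint_Sets"
begin

typedef partition = "{M :: nat multiset. 0 \<notin># M}"
  by (rule exI[of _ "{#}"]) simp

text \<open>Formal power series in \<open>u_1, u_2, \<dots>\<close> over \<open>\<rat>\<close>: the monomial
  \<open>u_\<lambda> = \<Prod> u_{\<lambda>_i}\<close> corresponds bijectively to the partition \<open>\<lambda>\<close>, so a series is a
  coefficient function \<open>partition \<Rightarrow> rat\<close>. Since \<open>u_\<mu> u_\<nu> = u_{\<mu> \<union> \<nu>}\<close> (multiset sum),
  the product of series is the following convolution.\<close>
definition ser_mult :: "(partition \<Rightarrow> rat) \<Rightarrow> (partition \<Rightarrow> rat) \<Rightarrow> partition \<Rightarrow> rat" where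
  "ser_mult F G l = (\<Sum>M\<in>{M. M \<subseteq># Rep_partition l}.
      F (Abs_partition M) * G (Abs_partition (Rep_partition l - M)))"

definition ser_one :: "partition \<Rightarrow> rat" where
  "ser_one l = (if Rep_partition l = {#} then 1 else 0)"

definition ser_Z :: "partition \<Rightarrow> rat" where
  "ser_Z = (\<lambda>_. 1)"

text \<open>The u-bracket \<open>\<langle>f\<rangle>_u = (\<Sum>_\<lambda> f(\<lambda>) u_\<lambda>) / (\<Sum>_\<lambda> u_\<lambda>)\<close>.\<close>
definition ubracket :: "(partition \<Rightarrow> rat) \<Rightarrow> partition \<Rightarrow> rat" where
  "ubracket f = ser_mult f (THE G. ser_mult ser_Z G = ser_one)"

definition odot :: "(partition \<Rightarrow> rat) \<Rightarrow> (partition \<Rightarrow> rat) \<Rightarrow> partition \<Rightarrow> rat" where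
  "odot f g = (THE h. ubracket h = ser_mult (ubracket f) (ubracket g))"

definition bigodot :: "('a \<Rightarrow> partition \<Rightarrow> rat) \<Rightarrow> 'a set \<Rightarrow> partition \<Rightarrow> rat" where
  "bigodot h A = Finite_Set.fold (\<lambda>C acc. odot (h C) acc) (\<lambda>_. 1) A"

definition connprod :: "(partition \<Rightarrow> rat) list \<Rightarrow> partition \<Rightarrow> rat" where
  "connprod hs = (\<lambda>l. \<Sum>\<alpha>\<in>{\<alpha>. partition_on {1..length hs} \<alpha>}.
      (-1) ^ (card \<alpha> - 1) * fact (card \<alpha> - 1) *
      bigodot (\<lambda>C l'. \<Prod>c\<in>C. (hs ! (c - 1)) l') \<alpha> l)"

end

theory Submission
  imports Defs
begin

lemma finite_submsets: "finite {M. M \<subseteq># (L::'a multiset)}"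
proof (rule finite_subset)
  show "{M. M \<subseteq># L} \<subseteq> (\<Union>n\<in>{..size L}. multisets_of_size (set_mset L) n)"
    by (auto simp: multisets_of_size_def dest: set_mset_mono size_mset_mono)
  show "finite (\<Union>n\<in>{..size L}. multisets_of_size (set_mset L) n)"
    by (intro finite_UN_I) auto
qed

definition cv :: "('a multiset \<Rightarrow> 'b::comm_ring_1) \<Rightarrow> ('a multiset \<Rightarrow> 'b) \<Rightarrow> 'a multiset \<Rightarrow> 'b" where
  "cv F G L = (\<Sum>M\<in>{M. M \<subseteq># L}. F M * G (L - M))"

lemma ms_dd: "M \<subseteq># (L::'a multiset) \<Longrightarrow> L - (L - M) = M"
  by (metis subset_mset.add_diff_inverse add_diff_cancel_right')

lemma cv_comm: "cv F G L = cv G F L"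
  unfolding cv_def
  by (rule sum.reindex_bij_witness[of _ "\<lambda>M. L - M" "\<lambda>M. L - M"]) (auto simp: ms_dd mult.commute)

lemma ms_f1: "N \<subseteq># M \<Longrightarrow> M \<subseteq># (L::'a multiset) \<Longrightarrow> M - N \<subseteq># L - N"
  using subset_eq_diff_conv by fastforce
lemma ms_f2: "N \<subseteq># M \<Longrightarrow> M \<subseteq># (L::'a multiset) \<Longrightarrow> L - N - (M - N) = L - M"
  by simp
lemma ms_f3: "N \<subseteq># (L::'a multiset) \<Longrightarrow> K \<subseteq># L - N \<Longrightarrow> N + K \<subseteq># L"
  by (metis subset_mset.le_diff_conv2 union_commute)
lemma ms_f4: "N \<subseteq># (L::'a multiset) \<Longrightarrow> L - N - K = L - (N + K)"
  by simp

lemma cv_assoc: "cv (cv F G) H L = cv F (cv G H) L"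
proof -
  have "cv (cv F G) H L = (\<Sum>(M,N)\<in>Sigma {M. M \<subseteq># L} (\<lambda>M. {N. N \<subseteq># M}). F N * G (M - N) * H (L - M))"
    unfolding cv_def sum_distrib_right
    by (subst sum.Sigma) (auto simp: finite_submsets)
  also have "\<dots> = (\<Sum>(N,K)\<in>Sigma {N. N \<subseteq># L} (\<lambda>N. {K. K \<subseteq># L - N}). F N * (G K * H (L - N - K)))"
    apply (rule sum.reindex_bij_witness[of _ "\<lambda>(N,K). (N + K, N)" "\<lambda>(M,N). (N, M - N)"])
        apply (clarsimp simp: subset_mset.add_diff_inverse)
       apply (clarsimp simp: ms_f1) apply (meson subset_mset.order_trans)
      apply clarsimp
     apply (clarsimp simp: ms_f3)
    apply (clarsimp simp: ms_f2 mult.assoc)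
    done
  also have "\<dots> = cv F (cv G H) L"
    unfolding cv_def sum_distrib_left
    by (subst sum.Sigma) (auto simp: finite_submsets)
  finally show ?thesis .
qed


definition e1 :: "'a multiset \<Rightarrow> 'b::comm_ring_1" where "e1 L = (if L = {#} then 1 else 0)"

lemma cv_e1: "cv e1 F L = F L"
proof -
  have "cv e1 F L = (\<Sum>M\<in>{M. M \<subseteq># L}. if M = {#} then F L else 0)"
    unfolding cv_def e1_def by (rule sum.cong) auto
  also have "\<dots> = F L" by (simp add: sum.delta finite_submsets)
  finally show ?thesis .
qed

definition gi :: "'a multiset \<Rightarrow> 'b::comm_ring_1" where
  "gi M = (if \<forall>x. count M x \<le> 1 then (-1) ^ size M else 0)"

lemma mset_set_sub: "D \<subseteq> set_mset L \<Longrightarrow> mset_set D \<subseteq># L"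
proof -
  assume D: "D \<subseteq> set_mset L"
  then have fD: "finite D" using finite_subset by blast
  show ?thesis unfolding subseteq_mset_def
  proof
    fix x show "count (mset_set D) x \<le> count L x"
      using D fD by (auto simp: count_mset_set' Suc_le_eq)
  qed
qed

lemma setlike_mset_set: "mset_set (set_mset M) = M" if "\<forall>x. count M x \<le> 1"
proof (rule multiset_eqI)
  fix x show "count (mset_set (set_mset M)) x = count M x"
    using that[rule_format, of x] by (cases "x \<in># M") (auto simp: count_mset_set' count_eq_zero_iff le_Suc_eq)
qed

lemma fin_sub: "b \<subseteq> set_mset L \<Longrightarrow> finite b" by (meson finite_set_mset finite_subset)
lemma setlike_card: "\<forall>x. count a x \<le> 1 \<Longrightarrow> card (set_mset a) = size a"
  by (metis setlike_mset_set size_mset_set)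

lemma cv_Z_gi: "cv (\<lambda>_. 1) gi L = (e1 L :: 'b::comm_ring_1)"
proof -
  have "cv (\<lambda>_. 1) gi L = (\<Sum>M\<in>{M. M \<subseteq># L}. (gi M :: 'b))"
    by (subst cv_comm) (simp add: cv_def)
  also have "\<dots> = (\<Sum>M\<in>{M. M \<subseteq># L \<and> (\<forall>x. count M x \<le> 1)}. (-1) ^ size M)"
    by (rule sum.mono_neutral_cong_right) (auto simp: gi_def finite_submsets)
  also have "\<dots> = (\<Sum>D\<in>Pow (set_mset L). (-1) ^ card D)"
    apply (rule sum.reindex_bij_witness[of _ mset_set set_mset])
        apply (auto simp: setlike_mset_set mset_set_sub count_mset_set' setlike_card)
       apply (meson mset_subset_eqD)
      apply (meson elem_mset_set fin_sub)
     apply (meson elem_mset_set fin_sub)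
    done
  also have "\<dots> = (\<Prod>x\<in>set_mset L. (1::'b) - 1)"
    by (subst prod_diff_conv_sum) auto
  also have "\<dots> = e1 L"
    by (auto simp: e1_def zero_power card_gt_0_iff)
  finally show ?thesis .
qed

lemma cv_add_left: "cv (\<lambda>M. F M + F' M) G L = cv F G L + cv F' G L"
  unfolding cv_def by (simp add: distrib_right sum.distrib)

lemma cv_smult_left: "cv (\<lambda>M. c * F M) G L = c * cv F G L"
  unfolding cv_def by (simp add: sum_distrib_left mult.assoc)

lemma cv_cong: "(\<And>M. M \<subseteq># L \<Longrightarrow> F M = F' M) \<Longrightarrow> (\<And>M. M \<subseteq># L \<Longrightarrow> G M = G' M)
   \<Longrightarrow> cv F G L = cv F' G' L"
  unfolding cv_def by (rule sum.cong) auto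


definition lift :: "(partition \<Rightarrow> rat) \<Rightarrow> nat multiset \<Rightarrow> rat" where
  "lift F M = F (Abs_partition M)"

lemma good_Rep: "0 \<notin># Rep_partition l"
  using Rep_partition by auto

lemma good_sub: "M \<subseteq># L \<Longrightarrow> 0 \<notin># L \<Longrightarrow> 0 \<notin># M"
  by (meson mset_subset_eqD)

lemma Rep_Abs: "0 \<notin># M \<Longrightarrow> Rep_partition (Abs_partition M) = M"
  by (simp add: Abs_partition_inverse)

lemma ser_mult_cv: "ser_mult F G l = cv (lift F) (lift G) (Rep_partition l)"
  by (simp add: ser_mult_def cv_def lift_def)

lemma lift_ser_mult: "0 \<notin># M \<Longrightarrow> lift (ser_mult F G) M = cv (lift F) (lift G) M"
  by (simp add: lift_def ser_mult_cv Rep_Abs)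

lemma sm_assoc: "ser_mult (ser_mult F G) H = ser_mult F (ser_mult G H)"
proof
  fix l
  let ?L = "Rep_partition l"
  have "ser_mult (ser_mult F G) H l = cv (lift (ser_mult F G)) (lift H) ?L"
    by (rule ser_mult_cv)
  also have "\<dots> = cv (cv (lift F) (lift G)) (lift H) ?L"
    by (rule cv_cong) (auto intro!: lift_ser_mult dest: good_sub[OF _ good_Rep])
  also have "\<dots> = cv (lift F) (cv (lift G) (lift H)) ?L" by (rule cv_assoc)
  also have "\<dots> = cv (lift F) (lift (ser_mult G H)) ?L"
    by (rule cv_cong) (auto intro!: lift_ser_mult[symmetric] dest: good_sub[OF _ good_Rep])
  also have "\<dots> = ser_mult F (ser_mult G H) l"
    by (rule ser_mult_cv[symmetric])
  finally show "ser_mult (ser_mult F G) H l = ser_mult F (ser_mult G H) l" .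
qed

lemma sm_comm: "ser_mult F G = ser_mult G F"
  by (rule ext) (simp add: ser_mult_cv cv_comm)

lemma sm_lcomm: "ser_mult F (ser_mult G H) = ser_mult G (ser_mult F H)"
  by (metis sm_assoc sm_comm)

lemma sm_one: "ser_mult ser_one F = F"
proof
  fix l
  have "ser_mult ser_one F l = cv e1 (lift F) (Rep_partition l)"
    unfolding ser_mult_cv
    by (rule cv_cong) (auto simp: lift_def ser_one_def e1_def Rep_Abs dest: good_sub[OF _ good_Rep])
  also have "\<dots> = F l" by (simp add: cv_e1 lift_def Rep_partition_inverse)
  finally show "ser_mult ser_one F l = F l" .
qed

definition Zi :: "partition \<Rightarrow> rat" where "Zi l = gi (Rep_partition l)"

lemma Z_Zi: "ser_mult ser_Z Zi = ser_one"
proof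
  fix l
  have "ser_mult ser_Z Zi l = cv (\<lambda>_. 1) gi (Rep_partition l)"
    unfolding ser_mult_cv
    by (rule cv_cong) (auto simp: lift_def ser_Z_def Zi_def Rep_Abs dest: good_sub[OF _ good_Rep])
  also have "\<dots> = ser_one l" by (simp add: cv_Z_gi e1_def ser_one_def)
  finally show "ser_mult ser_Z Zi l = ser_one l" .
qed

lemma sm_add: "ser_mult (\<lambda>l. F l + F' l) G = (\<lambda>l. ser_mult F G l + ser_mult F' G l)"
  unfolding ser_mult_def by (simp add: distrib_right sum.distrib)

lemma sm_smult: "ser_mult (\<lambda>l. c * F l) G = (\<lambda>l. c * ser_mult F G l)"
  unfolding ser_mult_def by (simp add: sum_distrib_left mult.assoc)

lemma THE_Zi: "(THE G. ser_mult ser_Z G = ser_one) = Zi"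
proof (rule the_equality)
  show "ser_mult ser_Z Zi = ser_one" by (rule Z_Zi)
  fix G assume G: "ser_mult ser_Z G = ser_one"
  have "G = ser_mult (ser_mult Zi ser_Z) G" by (simp add: sm_comm[of Zi] Z_Zi sm_one)
  also have "\<dots> = ser_mult Zi ser_one" by (simp only: sm_assoc G)
  also have "\<dots> = Zi" by (metis sm_comm sm_one)
  finally show "G = Zi" .
qed

lemma ubracket_eq: "ubracket f = ser_mult f Zi"
  by (simp add: ubracket_def THE_Zi)

lemma odot_eq: "odot f g = ser_mult (ser_mult f g) Zi"
  unfolding odot_def
proof (rule the_equality)
  show "ubracket (ser_mult (ser_mult f g) Zi) = ser_mult (ubracket f) (ubracket g)"
    unfolding ubracket_eq by (simp only: sm_assoc sm_comm sm_lcomm)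
  fix h assume h: "ubracket h = ser_mult (ubracket f) (ubracket g)"
  have "h = ser_mult (ser_mult ser_Z Zi) h" by (simp add: Z_Zi sm_one)
  also have "\<dots> = ser_mult ser_Z (ubracket h)" unfolding ubracket_eq by (simp only: sm_assoc sm_comm sm_lcomm)
  also have "\<dots> = ser_mult ser_Z (ser_mult (ubracket f) (ubracket g))" by (simp only: h)
  also have "\<dots> = ser_mult (ser_mult ser_Z Zi) (ser_mult (ser_mult f g) Zi)"
    unfolding ubracket_eq by (simp only: sm_assoc sm_comm sm_lcomm)
  also have "\<dots> = ser_mult (ser_mult f g) Zi"
    by (simp only: Z_Zi sm_one)
  finally show "h = ser_mult (ser_mult f g) Zi" .
qed


lemma odot_assoc: "odot (odot f g) h = odot f (odot g h)"
  unfolding odot_eq by (simp only: sm_assoc sm_comm sm_lcomm)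

lemma odot_comm: "odot f g = odot g f"
  unfolding odot_eq by (simp only: sm_comm)

lemma odot_one: "odot ser_Z f = f"
proof -
  have "odot ser_Z f = ser_mult (ser_mult ser_Z Zi) f"
    unfolding odot_eq by (simp only: sm_assoc sm_comm sm_lcomm)
  also have "\<dots> = f" by (simp only: Z_Zi sm_one)
  finally show ?thesis .
qed

lemma odot_add: "odot (\<lambda>l. f l + f' l) g = (\<lambda>l. odot f g l + odot f' g l)"
  unfolding odot_eq by (simp add: sm_add)

lemma odot_const: "odot (\<lambda>_. c) g = (\<lambda>l. c * g l)"
proof -
  have "(\<lambda>_. c) = (\<lambda>l. c * ser_Z l)" by (simp add: ser_Z_def)
  then have "odot (\<lambda>_. c) g = (\<lambda>l. c * odot ser_Z g l)"
    unfolding odot_eq by (simp add: sm_smult)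
  then show ?thesis by (simp add: odot_one)
qed

typedef ser = "UNIV :: (partition \<Rightarrow> rat) set" by simp

instantiation ser :: comm_ring_1
begin
definition "zero_ser = Abs_ser (\<lambda>_. 0)"
definition "one_ser = Abs_ser ser_Z"
definition "plus_ser x y = Abs_ser (\<lambda>l. Rep_ser x l + Rep_ser y l)"
definition "uminus_ser x = Abs_ser (\<lambda>l. - Rep_ser x l)"
definition "minus_ser x y = Abs_ser (\<lambda>l. Rep_ser x l - Rep_ser y l)"
definition "times_ser x y = Abs_ser (odot (Rep_ser x) (Rep_ser y))"
instance
proof
  fix a b c :: ser
  show "a * b * c = a * (b * c)"
    by (simp add: times_ser_def Abs_ser_inverse odot_assoc)
  show "a * b = b * a"
    by (simp add: times_ser_def odot_comm)
  show "1 * a = a"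
    by (simp add: times_ser_def one_ser_def Abs_ser_inverse odot_one Rep_ser_inverse)
  show "(a + b) * c = a * c + b * c"
    by (simp add: times_ser_def plus_ser_def Abs_ser_inverse odot_add)
  show "(0::ser) \<noteq> 1"
    by (simp add: zero_ser_def one_ser_def Abs_ser_inject ser_Z_def fun_eq_iff)
  show "a + b + c = a + (b + c)"
    by (simp add: plus_ser_def Abs_ser_inverse add.assoc)
  show "a + b = b + a"
    by (simp add: plus_ser_def add.commute)
  show "0 + a = a"
    by (simp add: plus_ser_def zero_ser_def Abs_ser_inverse Rep_ser_inverse)
  show "- a + a = 0"
    by (simp add: plus_ser_def zero_ser_def uminus_ser_def Abs_ser_inverse)
  show "a - b = a + - b"
    by (simp add: plus_ser_def minus_ser_def uminus_ser_def Abs_ser_inverse)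
qed
end

lemma Rep_ser_add: "Rep_ser (a + b) l = Rep_ser a l + Rep_ser b l"
  by (simp add: plus_ser_def Abs_ser_inverse)

lemma Rep_ser_sum: "Rep_ser (\<Sum>i\<in>A. X i) l = (\<Sum>i\<in>A. Rep_ser (X i) l)"
proof (induction A rule: infinite_finite_induct)
  case (infinite A) then show ?case by (simp add: zero_ser_def Abs_ser_inverse)
next
  case empty then show ?case by (simp add: zero_ser_def Abs_ser_inverse)
next
  case (insert x F) then show ?case by (simp add: Rep_ser_add)
qed

lemma Rep_ser_of_nat: "Rep_ser (of_nat k) = (\<lambda>_. of_nat k)"
proof (induction k)
  case 0 then show ?case by (simp add: zero_ser_def Abs_ser_inverse)
next
  case (Suc k) then show ?case
    by (simp add: plus_ser_def one_ser_def Abs_ser_inverse ser_Z_def add.commute)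
qed

lemma Rep_ser_of_int: "Rep_ser (of_int k) = (\<lambda>_. of_int k)"
proof (cases k rule: int_cases)
  case (nonneg n) then show ?thesis by (simp add: Rep_ser_of_nat)
next
  case (neg n) then show ?thesis
    by (simp add: uminus_ser_def Abs_ser_inverse Rep_ser_of_nat del: of_nat_Suc)
qed

lemma Rep_ser_of_int_mult: "Rep_ser (of_int k * X) l = of_int k * Rep_ser X l"
  by (simp add: times_ser_def Abs_ser_inverse Rep_ser_of_int odot_const)

lemma bigodot_prod: "finite A \<Longrightarrow> bigodot h A = Rep_ser (\<Prod>C\<in>A. Abs_ser (h C))"
proof (induction A rule: finite_induct)
  case empty
  then show ?case by (simp add: bigodot_def one_ser_def Abs_ser_inverse ser_Z_def)
next
  case (insert x F)
  have cf: "comp_fun_commute (\<lambda>C acc. odot (h C) acc)"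
    unfolding comp_fun_commute_def
  proof (intro allI)
    fix y z
    show "(\<lambda>acc. odot (h y) acc) \<circ> (\<lambda>acc. odot (h z) acc) = (\<lambda>acc. odot (h z) acc) \<circ> (\<lambda>acc. odot (h y) acc)"
    proof
      fix w
      show "((\<lambda>acc. odot (h y) acc) \<circ> (\<lambda>acc. odot (h z) acc)) w = ((\<lambda>acc. odot (h z) acc) \<circ> (\<lambda>acc. odot (h y) acc)) w"
        unfolding comp_def by (metis odot_assoc odot_comm)
    qed
  qed
  have "bigodot h (insert x F) = odot (h x) (bigodot h F)"
    unfolding bigodot_def by (rule comp_fun_commute_on.fold_insert[OF cf[unfolded comp_fun_commute_def']]) (use insert in auto)
  also have "\<dots> = odot (h x) (Rep_ser (\<Prod>C\<in>F. Abs_ser (h C)))" by (simp only: insert.IH)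
  also have "\<dots> = Rep_ser (Abs_ser (h x) * (\<Prod>C\<in>F. Abs_ser (h C)))"
    by (simp add: times_ser_def Abs_ser_inverse)
  also have "\<dots> = Rep_ser (\<Prod>C\<in>insert x F. Abs_ser (h C))" using insert.hyps by simp
  finally show ?case .
qed


definition mu :: "nat \<Rightarrow> int" where "mu k = (-1) ^ (k - 1) * fact (k - 1)"

definition Kc :: "'a set \<Rightarrow> ('a set \<Rightarrow> 'r::comm_ring_1) \<Rightarrow> 'r" where
  "Kc S m = (\<Sum>\<alpha>\<in>{\<alpha>. partition_on S \<alpha>}. of_int (mu (card \<alpha>)) * (\<Prod>C\<in>\<alpha>. m C))"

lemma Kc_cong: "(\<And>C. C \<subseteq> S \<Longrightarrow> m C = m' C) \<Longrightarrow> Kc S m = Kc S m'"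
  unfolding Kc_def
  by (intro sum.cong refl arg_cong2[where f="(*)"] prod.cong) (auto simp: partition_on_def)

lemma partition_on_image:
  assumes "partition_on S \<alpha>" "inj_on \<sigma> S"
  shows "partition_on (\<sigma> ` S) ((`) \<sigma> ` \<alpha>)"
proof -
  have "partition_on (\<sigma> ` S) ((`) \<sigma> ` \<alpha> - {{}})"
    by (rule partition_on_inj_image[OF assms])
  moreover have "{} \<notin> (`) \<sigma> ` \<alpha>" using assms(1) by (auto simp: partition_on_def)
  ultimately show ?thesis by simp
qed

lemma image_image_inv:
  assumes "inj_on \<sigma> S" "C \<subseteq> S"
  shows "inv_into S \<sigma> ` \<sigma> ` C = C"
  using assms by (auto simp: image_iff inv_into_f_f subset_iff)

lemma Kc_bij:
  assumes bij: "bij_betw \<sigma> S T"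
  shows "Kc S (\<lambda>C. m (\<sigma> ` C)) = Kc T m"
proof -
  have inj: "inj_on \<sigma> S" and T: "\<sigma> ` S = T" using bij by (auto simp: bij_betw_def)
  define \<tau> where "\<tau> = inv_into S \<sigma>"
  have bijT: "bij_betw \<tau> T S" unfolding \<tau>_def using bij by (rule bij_betw_inv_into)
  have injT: "inj_on \<tau> T" and S: "\<tau> ` T = S" using bijT by (auto simp: bij_betw_def)
  have blocks: "C \<subseteq> S" if "partition_on S \<alpha>" "C \<in> \<alpha>" for \<alpha> C
    using that by (auto simp: partition_on_def)
  have blocksT: "D \<subseteq> T" if "partition_on T \<beta>" "D \<in> \<beta>" for \<beta> D
    using that by (auto simp: partition_on_def)
  have tt: "\<sigma> ` \<tau> ` D = D" if "D \<subseteq> T" for D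
    unfolding \<tau>_def using that T by (auto simp: image_iff f_inv_into_f subset_iff)
  have st: "\<tau> ` \<sigma> ` C = C" if "C \<subseteq> S" for C
    unfolding \<tau>_def using image_image_inv[OF inj that] .
  have bb: "bij_betw (\<lambda>\<alpha>. (`) \<sigma> ` \<alpha>) {\<alpha>. partition_on S \<alpha>} {\<beta>. partition_on T \<beta>}"
  proof (rule bij_betw_byWitness[where f'="\<lambda>\<beta>. (`) \<tau> ` \<beta>"])
    show "\<forall>a\<in>{\<alpha>. partition_on S \<alpha>}. (`) \<tau> ` (`) \<sigma> ` a = a"
      using st blocks by (auto simp: image_image)
    show "\<forall>a'\<in>{\<beta>. partition_on T \<beta>}. (`) \<sigma> ` (`) \<tau> ` a' = a'"
      using tt blocksT by (auto simp: image_image)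
    show "(\<lambda>\<alpha>. (`) \<sigma> ` \<alpha>) ` {\<alpha>. partition_on S \<alpha>} \<subseteq> {\<beta>. partition_on T \<beta>}"
      using partition_on_image[OF _ inj] T by auto
    show "(\<lambda>\<beta>. (`) \<tau> ` \<beta>) ` {\<beta>. partition_on T \<beta>} \<subseteq> {\<alpha>. partition_on S \<alpha>}"
      using partition_on_image[OF _ injT] S by auto
  qed
  have injblocks: "inj_on ((`) \<sigma>) \<alpha>" if "partition_on S \<alpha>" for \<alpha>
  proof (rule inj_onI)
    fix C D assume "C \<in> \<alpha>" "D \<in> \<alpha>" "\<sigma> ` C = \<sigma> ` D"
    then show "C = D" using st blocks[OF that] by metis
  qed
  have "Kc T m = (\<Sum>\<alpha>\<in>{\<alpha>. partition_on S \<alpha>}. of_int (mu (card ((`) \<sigma> ` \<alpha>))) * (\<Prod>C\<in>(`) \<sigma> ` \<alpha>. m C))"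
    unfolding Kc_def by (rule sum.reindex_bij_betw[OF bb, symmetric])
  also have "\<dots> = Kc S (\<lambda>C. m (\<sigma> ` C))"
    unfolding Kc_def
    by (intro sum.cong refl) (simp add: card_image injblocks prod.reindex)
  finally show ?thesis by simp
qed

lemma Rep_ser_prod_fin: "finite A \<Longrightarrow> Rep_ser (\<Prod>C\<in>A. Abs_ser (h C)) = bigodot h A"
  by (simp add: bigodot_prod)

lemma connprod_Kc:
  "connprod hs = Rep_ser (Kc {1..length hs} (\<lambda>C. Abs_ser (\<lambda>l. \<Prod>c\<in>C. (hs ! (c - 1)) l)))"
proof
  fix l
  show "connprod hs l = Rep_ser (Kc {1..length hs} (\<lambda>C. Abs_ser (\<lambda>l. \<Prod>c\<in>C. (hs ! (c - 1)) l))) l"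
    unfolding connprod_def Kc_def Rep_ser_sum Rep_ser_of_int_mult
  proof (intro sum.cong refl)
    fix \<alpha> assume "\<alpha> \<in> {\<alpha>. partition_on {1..length hs} \<alpha>}"
    then have "finite \<alpha>" using finite_elements by blast
    then show "(-1) ^ (card \<alpha> - 1) * fact (card \<alpha> - 1) * bigodot (\<lambda>C l'. \<Prod>c\<in>C. (hs ! (c - 1)) l') \<alpha> l =
          of_int (mu (card \<alpha>)) * Rep_ser (\<Prod>C\<in>\<alpha>. Abs_ser (\<lambda>l. \<Prod>c\<in>C. (hs ! (c - 1)) l)) l"
      by (simp add: Rep_ser_prod_fin mu_def)
  qed
qed

lemma connprod_relabel:
  assumes bij: "bij_betw \<sigma> {1..length hs} T"
    and hs: "\<And>c. c \<in> {1..length hs} \<Longrightarrow> hs ! (c - 1) = g (\<sigma> c)"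
  shows "connprod hs = Rep_ser (Kc T (\<lambda>D. Abs_ser (\<lambda>l. \<Prod>d\<in>D. g d l)))"
proof -
  have inj: "inj_on \<sigma> {1..length hs}" using bij by (simp add: bij_betw_def)
  have "Kc {1..length hs} (\<lambda>C. Abs_ser (\<lambda>l. \<Prod>c\<in>C. (hs ! (c - 1)) l))
      = Kc {1..length hs} (\<lambda>C. (\<lambda>D. Abs_ser (\<lambda>l. \<Prod>d\<in>D. g d l)) (\<sigma> ` C))"
  proof (rule Kc_cong)
    fix C assume C: "C \<subseteq> {1..length hs}"
    have "(\<lambda>l. \<Prod>c\<in>C. (hs ! (c - 1)) l) = (\<lambda>l. \<Prod>c\<in>C. g (\<sigma> c) l)"
      using C hs by (intro ext prod.cong) auto
    also have "\<dots> = (\<lambda>l. \<Prod>d\<in>\<sigma> ` C. g d l)"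
      using inj_on_subset[OF inj C] by (simp add: prod.reindex)
    finally show "Abs_ser (\<lambda>l. \<Prod>c\<in>C. (hs ! (c - 1)) l) = (\<lambda>D. Abs_ser (\<lambda>l. \<Prod>d\<in>D. g d l)) (\<sigma> ` C)"
      by simp
  qed
  also have "\<dots> = Kc T (\<lambda>D. Abs_ser (\<lambda>l. \<Prod>d\<in>D. g d l))"
    by (rule Kc_bij[OF bij])
  finally show ?thesis by (simp add: connprod_Kc)
qed


lemma fact_sum: "finite Ob \<Longrightarrow> (\<Sum>Q\<in>Pow Ob. fact (card Q) * fact (card Ob - card Q) :: nat) = fact (card Ob + 1)"
proof (induction Ob rule: finite_induct)
  case empty
  then show ?case by simp
next
  case (insert x Ob)
  let ?k = "card Ob"
  have cQ: "card Q \<le> ?k" if "Q \<in> Pow Ob" for Q using that insert.hyps(1) by (simp add: card_mono)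
  have inj: "inj_on (insert x) (Pow Ob)" using insert.hyps(2) by (auto simp: inj_on_def)
  have "(\<Sum>Q\<in>Pow (insert x Ob). fact (card Q) * fact (card (insert x Ob) - card Q) :: nat)
      = (\<Sum>Q\<in>Pow Ob. fact (card Q) * fact (Suc ?k - card Q)) + (\<Sum>Q\<in>insert x ` Pow Ob. fact (card Q) * fact (Suc ?k - card Q))"
    unfolding Pow_insert using insert.hyps
    by (subst sum.union_disjoint) auto
  also have "(\<Sum>Q\<in>insert x ` Pow Ob. fact (card Q) * fact (Suc ?k - card Q)) = (\<Sum>Q\<in>Pow Ob. fact (Suc (card Q)) * fact (?k - card Q))"
    apply (subst sum.reindex[OF inj])
    apply (intro sum.cong refl)
    using insert.hyps by (auto simp: card_insert_if finite_subset)
  also have "(\<Sum>Q\<in>Pow Ob. fact (card Q) * fact (Suc ?k - card Q)) + (\<Sum>Q\<in>Pow Ob. fact (Suc (card Q)) * fact (?k - card Q))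
      = (\<Sum>Q\<in>Pow Ob. (Suc ?k + 1) * (fact (card Q) * fact (?k - card Q)))"
    unfolding sum.distrib[symmetric]
  proof (intro sum.cong refl)
    fix Q assume Q: "Q \<in> Pow Ob"
    have e: "Suc ?k - card Q = Suc (?k - card Q)" using cQ[OF Q] by simp
    show "fact (card Q) * fact (Suc ?k - card Q) + fact (Suc (card Q)) * fact (?k - card Q)
        = (Suc ?k + 1) * (fact (card Q) * fact (?k - card Q))"
    proof -
      obtain d where d: "?k = card Q + d" using cQ[OF Q] le_Suc_ex by blast
      show ?thesis unfolding e fact_Suc d by (simp add: algebra_simps)
    qed
  qed
  also have "\<dots> = (Suc ?k + 1) * fact (?k + 1)" by (simp only: sum_distrib_left[symmetric] insert.IH)
  also have "\<dots> = fact (card (insert x Ob) + 1)" using insert.hyps by simp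
  finally show ?case .
qed

lemma mu_sum: "finite Ob \<Longrightarrow> (\<Sum>Q\<in>Pow Ob. mu (card Q + 1) * mu (card Ob - card Q + 1)) = - mu (card Ob + 2)"
proof -
  assume fO: "finite Ob"
  have "(\<Sum>Q\<in>Pow Ob. mu (card Q + 1) * mu (card Ob - card Q + 1))
      = (\<Sum>Q\<in>Pow Ob. (-1) ^ card Ob * int (fact (card Q) * fact (card Ob - card Q)))"
  proof (intro sum.cong refl)
    fix Q assume Q: "Q \<in> Pow Ob"
    then have c: "card Q \<le> card Ob" using fO by (simp add: card_mono)
    have "(-1::int) ^ card Q * (-1) ^ (card Ob - card Q) = (-1) ^ card Ob"
      using c by (simp add: power_add[symmetric])
    then show "mu (card Q + 1) * mu (card Ob - card Q + 1) = (-1) ^ card Ob * int (fact (card Q) * fact (card Ob - card Q))"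
      unfolding mu_def by (simp add: algebra_simps of_nat_mult)
  qed
  also have "\<dots> = (-1) ^ card Ob * int (\<Sum>Q\<in>Pow Ob. fact (card Q) * fact (card Ob - card Q))"
    by (simp only: of_nat_sum sum_distrib_left)
  also have "\<dots> = (-1) ^ card Ob * int (fact (card Ob + 1))"
    by (simp only: fact_sum[OF fO])
  also have "\<dots> = - mu (card Ob + 2)"
    unfolding mu_def by (simp add: algebra_simps)
  finally show ?thesis .
qed


definition blk :: "'a set set \<Rightarrow> 'a \<Rightarrow> 'a set" where
  "blk \<gamma> x = (THE C. C \<in> \<gamma> \<and> x \<in> C)"

lemma blk_unique: "disjoint \<gamma> \<Longrightarrow> C \<in> \<gamma> \<Longrightarrow> x \<in> C \<Longrightarrow> blk \<gamma> x = C"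
  unfolding blk_def by (rule the_equality) (auto dest: disjointD)

lemma blk_mem: "partition_on X \<gamma> \<Longrightarrow> x \<in> X \<Longrightarrow> blk \<gamma> x \<in> \<gamma> \<and> x \<in> blk \<gamma> x"
proof -
  assume p: "partition_on X \<gamma>" and x: "x \<in> X"
  then obtain C where "C \<in> \<gamma>" "x \<in> C" by (auto simp: partition_on_def)
  then show ?thesis using blk_unique[OF partition_onD2[OF p]] by auto
qed

lemma partition_on_map:
  assumes "partition_on X \<alpha>"
    and "\<And>C. C \<in> \<alpha> \<Longrightarrow> f C \<noteq> {}"
    and "\<And>C D. C \<in> \<alpha> \<Longrightarrow> D \<in> \<alpha> \<Longrightarrow> C \<noteq> D \<Longrightarrow> f C \<inter> f D = {}"
    and "\<Union>(f ` \<alpha>) = Y"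
  shows "partition_on Y (f ` \<alpha>)"
  using assms unfolding partition_on_def disjoint_def by fastforce

lemma partition_on_sub: "partition_on X \<gamma> \<Longrightarrow> \<beta> \<subseteq> \<gamma> \<Longrightarrow> partition_on (\<Union>\<beta>) \<beta>"
  unfolding partition_on_def by (auto intro: pairwise_subset)

lemma merge_part:
  fixes m :: "'a set \<Rightarrow> 'r::comm_ring_1"
  assumes fin: "finite S" and a: "a \<in> S" and b: "b \<in> S" and ab: "a \<noteq> b"
  shows "Kc (S - {a}) (\<lambda>D. m (if b \<in> D then insert a D else D))
    = (\<Sum>\<gamma>\<in>{\<gamma>. partition_on S \<gamma> \<and> blk \<gamma> a = blk \<gamma> b}. of_int (mu (card \<gamma>)) * (\<Prod>C\<in>\<gamma>. m C))"
proof -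
  define ex where "ex = (\<lambda>D. if b \<in> D then insert a D else D)"
  have exa: "ex D - {a} = D" if "a \<notin> D" for D using that by (auto simp: ex_def)
  have blkS: "D \<subseteq> S - {a}" if "partition_on (S - {a}) \<beta>" "D \<in> \<beta>" for \<beta> D
    using that by (auto simp: partition_on_def)
  have inj: "inj_on ex \<beta>" if "partition_on (S - {a}) \<beta>" for \<beta>
    by (rule inj_onI) (metis exa blkS[OF that] Diff_iff insertI1 subsetD)
  have j_in: "partition_on S (ex ` \<beta>) \<and> blk (ex ` \<beta>) a = blk (ex ` \<beta>) b"
    if p: "partition_on (S - {a}) \<beta>" for \<beta>
  proof
    have disj: "disjoint \<beta>" using p by (rule partition_onD2)
    show ps: "partition_on S (ex ` \<beta>)"
    proof (rule partition_on_map[OF p])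
      fix C assume "C \<in> \<beta>" then show "ex C \<noteq> {}" using p by (auto simp: ex_def partition_on_def)
    next
      fix C D assume C: "C \<in> \<beta>" and D: "D \<in> \<beta>" and CD: "C \<noteq> D"
      have "C \<inter> D = {}" using disjointD[OF disj C D CD] .
      moreover have "a \<notin> C" "a \<notin> D" using blkS[OF p C] blkS[OF p D] by auto
      ultimately show "ex C \<inter> ex D = {}" by (auto simp: ex_def)
    next
      have "b \<in> \<Union>\<beta>" using p b ab by (auto simp: partition_on_def)
      then show "\<Union>(ex ` \<beta>) = S" using p a by (auto simp: ex_def partition_on_def split: if_splits)
    qed
    obtain Db where Db: "Db \<in> \<beta>" "b \<in> Db" using blk_mem[OF p] b ab by blast
    have m1: "ex Db \<in> ex ` \<beta>" using Db by simp
    have "a \<in> ex Db" "b \<in> ex Db" using Db by (auto simp: ex_def)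
    then have "blk (ex ` \<beta>) a = ex Db" "blk (ex ` \<beta>) b = ex Db"
      using blk_unique[OF partition_onD2[OF ps] m1] by auto
    then show "blk (ex ` \<beta>) a = blk (ex ` \<beta>) b" by simp
  qed
  have i_in: "partition_on (S - {a}) ((\<lambda>C. C - {a}) ` \<gamma>)"
    if p: "partition_on S \<gamma>" and e: "blk \<gamma> a = blk \<gamma> b" for \<gamma>
  proof (rule partition_on_map[OF p])
    fix C assume C: "C \<in> \<gamma>"
    show "C - {a} \<noteq> {}"
    proof (cases "a \<in> C")
      case True
      then have "C = blk \<gamma> a" using blk_unique[OF partition_onD2[OF p] C] by simp
      then have "b \<in> C" using e blk_mem[OF p b] by simp
      then show ?thesis using ab by auto
    next
      case False then show ?thesis using C p by (auto simp: partition_on_def)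
    qed
  next
    fix C D assume "C \<in> \<gamma>" "D \<in> \<gamma>" "C \<noteq> D"
    then show "(C - {a}) \<inter> (D - {a}) = {}" using disjointD[OF partition_onD2[OF p]] by blast
  next
    show "\<Union>((\<lambda>C. C - {a}) ` \<gamma>) = S - {a}" using p by (auto simp: partition_on_def)
  qed
  have ji: "ex ` (\<lambda>C. C - {a}) ` \<gamma> = \<gamma>"
    if p: "partition_on S \<gamma>" and e: "blk \<gamma> a = blk \<gamma> b" for \<gamma>
  proof -
    have "ex (C - {a}) = C" if C: "C \<in> \<gamma>" for C
    proof (cases "b \<in> C")
      case True
      then have "C = blk \<gamma> b" using blk_unique[OF partition_onD2[OF p] C] by simp
      then have "a \<in> C" using e blk_mem[OF p a] by simp
      then show ?thesis using True ab by (auto simp: ex_def)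
    next
      case False
      have "a \<notin> C"
      proof
        assume "a \<in> C"
        then have "C = blk \<gamma> a" using blk_unique[OF partition_onD2[OF p] C] by simp
        then have "b \<in> C" using e blk_mem[OF p b] by simp
        then show False using False by simp
      qed
      then show ?thesis using False by (auto simp: ex_def)
    qed
    then show ?thesis by (auto simp: image_image image_iff)
  qed
  have ij: "(\<lambda>C. C - {a}) ` ex ` \<beta> = \<beta>" if p: "partition_on (S - {a}) \<beta>" for \<beta>
  proof -
    have "ex D - {a} = D" if "D \<in> \<beta>" for D using exa blkS[OF p that] by blast
    then show ?thesis by (auto simp: image_image image_iff)
  qed
  show ?thesis
    unfolding Kc_def
  proof (rule sum.reindex_bij_witness[of _ "\<lambda>\<gamma>. (\<lambda>C. C - {a}) ` \<gamma>" "\<lambda>\<beta>. ex ` \<beta>"])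
    fix \<beta> assume "\<beta> \<in> {\<alpha>. partition_on (S - {a}) \<alpha>}"
    then have p: "partition_on (S - {a}) \<beta>" by simp
    show "(\<lambda>C. C - {a}) ` ex ` \<beta> = \<beta>" using ij[OF p] .
    show "ex ` \<beta> \<in> {\<gamma>. partition_on S \<gamma> \<and> blk \<gamma> a = blk \<gamma> b}" using j_in[OF p] by simp
    show "of_int (mu (card (ex ` \<beta>))) * (\<Prod>C\<in>ex ` \<beta>. m C) =
          of_int (mu (card \<beta>)) * (\<Prod>C\<in>\<beta>. m (if b \<in> C then insert a C else C))"
      using inj[OF p] by (simp add: card_image prod.reindex) (simp add: ex_def)
  next
    fix \<gamma> assume "\<gamma> \<in> {\<gamma>. partition_on S \<gamma> \<and> blk \<gamma> a = blk \<gamma> b}"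
    then have p: "partition_on S \<gamma>" and e: "blk \<gamma> a = blk \<gamma> b" by auto
    show "ex ` (\<lambda>C. C - {a}) ` \<gamma> = \<gamma>" using ji[OF p e] .
    show "(\<lambda>C. C - {a}) ` \<gamma> \<in> {\<alpha>. partition_on (S - {a}) \<alpha>}" using i_in[OF p e] by simp
  qed
qed


lemma Union_compl:
  assumes "disjoint \<gamma>" "\<alpha>1 \<subseteq> \<gamma>"
  shows "\<Union>(\<gamma> - \<alpha>1) = \<Union>\<gamma> - \<Union>\<alpha>1"
proof
  show "\<Union>(\<gamma> - \<alpha>1) \<subseteq> \<Union>\<gamma> - \<Union>\<alpha>1"
  proof
    fix x assume "x \<in> \<Union>(\<gamma> - \<alpha>1)"
    then obtain C where C: "C \<in> \<gamma>" "C \<notin> \<alpha>1" "x \<in> C" by auto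
    have "x \<notin> D" if "D \<in> \<alpha>1" for D
    proof
      assume "x \<in> D"
      have "D \<in> \<gamma>" "D \<noteq> C" using that assms(2) C by auto
      then have "D \<inter> C = {}" using disjointD[OF assms(1)] C by blast
      then show False using \<open>x \<in> D\<close> C by auto
    qed
    then show "x \<in> \<Union>\<gamma> - \<Union>\<alpha>1" using C by auto
  qed
  show "\<Union>\<gamma> - \<Union>\<alpha>1 \<subseteq> \<Union>(\<gamma> - \<alpha>1)" by auto
qed

lemma T_of_S:
  assumes p: "partition_on S \<gamma>" and fin: "finite S" and a: "a \<in> S" and b: "b \<in> S"
    and ne: "blk \<gamma> a \<noteq> blk \<gamma> b" and Q: "Q \<subseteq> \<gamma> - {blk \<gamma> a, blk \<gamma> b}"
  shows "\<Union>(insert (blk \<gamma> a) Q) - {a} \<subseteq> S - {a, b}"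
    and "partition_on (insert a (\<Union>(insert (blk \<gamma> a) Q) - {a})) (insert (blk \<gamma> a) Q)"
    and "partition_on (insert b (S - {a, b} - (\<Union>(insert (blk \<gamma> a) Q) - {a})))
           (insert (blk \<gamma> b) (\<gamma> - {blk \<gamma> a, blk \<gamma> b} - Q))"
    and "insert (blk \<gamma> a) Q \<union> insert (blk \<gamma> b) (\<gamma> - {blk \<gamma> a, blk \<gamma> b} - Q) = \<gamma>"
    and "blk (insert (blk \<gamma> a) Q) a = blk \<gamma> a"
    and "insert (blk \<gamma> a) Q - {blk \<gamma> a} = Q"
    and "card (insert (blk \<gamma> a) Q) = card Q + 1"
    and "card (insert (blk \<gamma> b) (\<gamma> - {blk \<gamma> a, blk \<gamma> b} - Q)) = card (\<gamma> - {blk \<gamma> a, blk \<gamma> b}) - card Q + 1"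
    and "(\<Prod>C\<in>insert (blk \<gamma> a) Q. m C) * (\<Prod>C\<in>insert (blk \<gamma> b) (\<gamma> - {blk \<gamma> a, blk \<gamma> b} - Q). m C)
         = (\<Prod>C\<in>\<gamma>. (m C :: 'r::comm_ring_1))"
proof -
  define Ga where "Ga = blk \<gamma> a"
  define Gb where "Gb = blk \<gamma> b"
  have disj: "disjoint \<gamma>" using p by (rule partition_onD2)
  have fg: "finite \<gamma>" using finite_elements[OF fin p] .
  have Ga: "Ga \<in> \<gamma>" "a \<in> Ga" using blk_mem[OF p a] by (auto simp: Ga_def)
  have Gb: "Gb \<in> \<gamma>" "b \<in> Gb" using blk_mem[OF p b] by (auto simp: Gb_def)
  have neab: "Ga \<noteq> Gb" using ne by (simp add: Ga_def Gb_def)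
  have Q': "Q \<subseteq> \<gamma> - {Ga, Gb}" using Q by (simp add: Ga_def Gb_def)
  have uniq: "C = blk \<gamma> x" if "C \<in> \<gamma>" "x \<in> C" for C x using blk_unique[OF disj that] by simp
  have bGa: "b \<notin> Ga" using uniq[OF Ga(1)] neab by (auto simp: Gb_def)
  have aQ: "a \<notin> C" "b \<notin> C" if "C \<in> Q" for C
    using that Q' uniq by (auto simp: Ga_def Gb_def) 
  have blocksS: "C \<subseteq> S" if "C \<in> \<gamma>" for C using that p by (auto simp: partition_on_def)
  have fQ: "finite Q" using Q' fg finite_subset by blast
  define \<alpha>1 where "\<alpha>1 = insert Ga Q"
  define \<alpha>2 where "\<alpha>2 = insert Gb (\<gamma> - {Ga, Gb} - Q)"
  have sub1: "\<alpha>1 \<subseteq> \<gamma>" using Ga Q' by (auto simp: \<alpha>1_def)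
  have a2: "\<alpha>2 = \<gamma> - \<alpha>1" using Ga Gb Q' neab by (auto simp: \<alpha>1_def \<alpha>2_def)
  have un: "\<alpha>1 \<union> \<alpha>2 = \<gamma>" using a2 sub1 by auto
  have int: "\<alpha>1 \<inter> \<alpha>2 = {}" using a2 by auto
  have U2: "\<Union>\<alpha>2 = S - \<Union>\<alpha>1" using Union_compl[OF disj sub1] a2 p by (simp add: partition_on_def)
  have aU1: "a \<in> \<Union>\<alpha>1" using Ga by (auto simp: \<alpha>1_def)
  have bU1: "b \<notin> \<Union>\<alpha>1" using bGa aQ by (auto simp: \<alpha>1_def)
  have U1S: "\<Union>\<alpha>1 \<subseteq> S" using sub1 blocksS by auto
  show "\<Union>(insert (blk \<gamma> a) Q) - {a} \<subseteq> S - {a, b}"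
    using U1S bU1 unfolding \<alpha>1_def Ga_def by auto
  show "partition_on (insert a (\<Union>(insert (blk \<gamma> a) Q) - {a})) (insert (blk \<gamma> a) Q)"
  proof -
    have "insert a (\<Union>\<alpha>1 - {a}) = \<Union>\<alpha>1" using aU1 by auto
    then show ?thesis using partition_on_sub[OF p sub1] unfolding \<alpha>1_def Ga_def by simp
  qed
  show "partition_on (insert b (S - {a, b} - (\<Union>(insert (blk \<gamma> a) Q) - {a})))
           (insert (blk \<gamma> b) (\<gamma> - {blk \<gamma> a, blk \<gamma> b} - Q))"
  proof -
    have "insert b (S - {a, b} - (\<Union>\<alpha>1 - {a})) = \<Union>\<alpha>2" using U2 aU1 bU1 b by auto
    then show ?thesis using partition_on_sub[OF p, of \<alpha>2] a2 unfolding \<alpha>1_def \<alpha>2_def Ga_def Gb_def by auto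
  qed
  show "insert (blk \<gamma> a) Q \<union> insert (blk \<gamma> b) (\<gamma> - {blk \<gamma> a, blk \<gamma> b} - Q) = \<gamma>"
    using un unfolding \<alpha>1_def \<alpha>2_def Ga_def Gb_def .
  show "blk (insert (blk \<gamma> a) Q) a = blk \<gamma> a"
    using blk_unique[OF pairwise_subset[OF disj sub1], of Ga a] Ga unfolding \<alpha>1_def Ga_def by simp
  have GaQ: "Ga \<notin> Q" using Q' by auto
  show "insert (blk \<gamma> a) Q - {blk \<gamma> a} = Q" using GaQ unfolding Ga_def by auto
  show "card (insert (blk \<gamma> a) Q) = card Q + 1" using GaQ fQ unfolding Ga_def by simp
  have fO: "finite (\<gamma> - {Ga, Gb})" using fg by simp
  show "card (insert (blk \<gamma> b) (\<gamma> - {blk \<gamma> a, blk \<gamma> b} - Q)) = card (\<gamma> - {blk \<gamma> a, blk \<gamma> b}) - card Q + 1"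
    using fO fQ Q' unfolding Ga_def[symmetric] Gb_def[symmetric]
    by (simp add: card_Diff_subset)
  show "(\<Prod>C\<in>insert (blk \<gamma> a) Q. m C) * (\<Prod>C\<in>insert (blk \<gamma> b) (\<gamma> - {blk \<gamma> a, blk \<gamma> b} - Q). m C)
         = (\<Prod>C\<in>\<gamma>. (m C :: 'r::comm_ring_1))"
  proof -
    have "finite \<alpha>1" "finite \<alpha>2" using fg sub1 a2 finite_subset by auto
    then have "(\<Prod>C\<in>\<alpha>1 \<union> \<alpha>2. m C) = (\<Prod>C\<in>\<alpha>1. m C) * (\<Prod>C\<in>\<alpha>2. m C)"
      using int by (rule prod.union_disjoint)
    then show ?thesis using un unfolding \<alpha>1_def \<alpha>2_def Ga_def Gb_def by simp
  qed
qed


lemma S_of_T: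
  assumes A: "A \<subseteq> S - {a, b}" and a: "a \<in> S" and b: "b \<in> S" and ab: "a \<noteq> b"
    and p1: "partition_on (insert a A) \<alpha>1" and p2: "partition_on (insert b (S - {a, b} - A)) \<alpha>2"
  shows "partition_on S (\<alpha>1 \<union> \<alpha>2)"
    and "blk (\<alpha>1 \<union> \<alpha>2) a \<noteq> blk (\<alpha>1 \<union> \<alpha>2) b"
    and "\<alpha>1 - {blk \<alpha>1 a} \<subseteq> (\<alpha>1 \<union> \<alpha>2) - {blk (\<alpha>1 \<union> \<alpha>2) a, blk (\<alpha>1 \<union> \<alpha>2) b}"
    and "\<Union>(insert (blk (\<alpha>1 \<union> \<alpha>2) a) (\<alpha>1 - {blk \<alpha>1 a})) - {a} = A"
    and "insert (blk (\<alpha>1 \<union> \<alpha>2) a) (\<alpha>1 - {blk \<alpha>1 a}) = \<alpha>1"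
    and "insert (blk (\<alpha>1 \<union> \<alpha>2) b)
           ((\<alpha>1 \<union> \<alpha>2) - {blk (\<alpha>1 \<union> \<alpha>2) a, blk (\<alpha>1 \<union> \<alpha>2) b} - (\<alpha>1 - {blk \<alpha>1 a})) = \<alpha>2"
proof -
  have U1: "\<Union>\<alpha>1 = insert a A" using p1 by (simp add: partition_on_def)
  have U2: "\<Union>\<alpha>2 = insert b (S - {a, b} - A)" using p2 by (simp add: partition_on_def)
  have dU: "\<Union>\<alpha>1 \<inter> \<Union>\<alpha>2 = {}" using U1 U2 A ab by auto
  have disj: "disjoint (\<alpha>1 \<union> \<alpha>2)"
    by (rule disjoint_union[OF partition_onD2[OF p1] partition_onD2[OF p2] dU])
  have ne1: "{} \<notin> \<alpha>1" using p1 by (simp add: partition_on_def)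
  have int: "\<alpha>1 \<inter> \<alpha>2 = {}"
  proof (rule ccontr)
    assume "\<alpha>1 \<inter> \<alpha>2 \<noteq> {}"
    then obtain C where "C \<in> \<alpha>1" "C \<in> \<alpha>2" by auto
    then have "C \<subseteq> \<Union>\<alpha>1 \<inter> \<Union>\<alpha>2" by auto
    then have "C = {}" using dU by auto
    then show False using ne1 \<open>C \<in> \<alpha>1\<close> by simp
  qed
  show pS: "partition_on S (\<alpha>1 \<union> \<alpha>2)"
    unfolding partition_on_def
  proof (intro conjI)
    show "\<Union>(\<alpha>1 \<union> \<alpha>2) = S" using U1 U2 A a b by auto
    show "disjoint (\<alpha>1 \<union> \<alpha>2)" by (rule disj)
    show "{} \<notin> \<alpha>1 \<union> \<alpha>2" using p1 p2 by (simp add: partition_on_def)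
  qed
  define Ga where "Ga = blk \<alpha>1 a"
  define Gb where "Gb = blk \<alpha>2 b"
  have Ga: "Ga \<in> \<alpha>1" "a \<in> Ga" using blk_mem[OF p1] by (auto simp: Ga_def)
  have Gb: "Gb \<in> \<alpha>2" "b \<in> Gb" using blk_mem[OF p2] by (auto simp: Gb_def)
  have bGa: "blk (\<alpha>1 \<union> \<alpha>2) a = Ga" using blk_unique[OF disj, of Ga a] Ga by simp
  have bGb: "blk (\<alpha>1 \<union> \<alpha>2) b = Gb" using blk_unique[OF disj, of Gb b] Gb by simp
  have neq: "Ga \<noteq> Gb" using Ga Gb int by auto
  show "blk (\<alpha>1 \<union> \<alpha>2) a \<noteq> blk (\<alpha>1 \<union> \<alpha>2) b" using bGa bGb neq by simp
  show "\<alpha>1 - {blk \<alpha>1 a} \<subseteq> (\<alpha>1 \<union> \<alpha>2) - {blk (\<alpha>1 \<union> \<alpha>2) a, blk (\<alpha>1 \<union> \<alpha>2) b}"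
    unfolding bGa bGb Ga_def[symmetric] using Gb int by auto
  have aA: "a \<notin> A" using A by auto
  show "insert (blk (\<alpha>1 \<union> \<alpha>2) a) (\<alpha>1 - {blk \<alpha>1 a}) = \<alpha>1"
    unfolding bGa Ga_def[symmetric] using Ga by auto
  then show "\<Union>(insert (blk (\<alpha>1 \<union> \<alpha>2) a) (\<alpha>1 - {blk \<alpha>1 a})) - {a} = A"
    using U1 aA by simp
  show "insert (blk (\<alpha>1 \<union> \<alpha>2) b)
           ((\<alpha>1 \<union> \<alpha>2) - {blk (\<alpha>1 \<union> \<alpha>2) a, blk (\<alpha>1 \<union> \<alpha>2) b} - (\<alpha>1 - {blk \<alpha>1 a})) = \<alpha>2"
    unfolding bGa bGb Ga_def[symmetric] using Ga Gb int by auto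
qed


lemma split_part:
  fixes m :: "'a set \<Rightarrow> 'r::comm_ring_1"
  assumes fin: "finite S" and a: "a \<in> S" and b: "b \<in> S" and ab: "a \<noteq> b"
  shows "(\<Sum>A\<in>Pow (S - {a, b}). Kc (insert a A) m * Kc (insert b (S - {a, b} - A)) m)
    = - (\<Sum>\<gamma>\<in>{\<gamma>. partition_on S \<gamma> \<and> blk \<gamma> a \<noteq> blk \<gamma> b}. of_int (mu (card \<gamma>)) * (\<Prod>C\<in>\<gamma>. m C))"
proof -
  define R where "R = S - {a, b}"
  define Psep where "Psep = {\<gamma>. partition_on S \<gamma> \<and> blk \<gamma> a \<noteq> blk \<gamma> b}"
  define Ob where "Ob \<gamma> = \<gamma> - {blk \<gamma> a, blk \<gamma> b}" for \<gamma> :: "'a set set"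
  define Tset where "Tset = Sigma (Pow R) (\<lambda>A. {\<alpha>. partition_on (insert a A) \<alpha>} \<times> {\<alpha>. partition_on (insert b (R - A)) \<alpha>})"
  define Sset where "Sset = Sigma Psep (\<lambda>\<gamma>. Pow (Ob \<gamma>))"
  define h :: "'a set \<times> 'a set set \<times> 'a set set \<Rightarrow> 'r" where
    "h = (\<lambda>(A, \<alpha>1, \<alpha>2). of_int (mu (card \<alpha>1)) * of_int (mu (card \<alpha>2)) * ((\<Prod>C\<in>\<alpha>1. m C) * (\<Prod>C\<in>\<alpha>2. m C)))"
  define g :: "'a set set \<times> 'a set set \<Rightarrow> 'r" where
    "g = (\<lambda>(\<gamma>, Q). of_int (mu (card Q + 1) * mu (card (Ob \<gamma>) - card Q + 1)) * (\<Prod>C\<in>\<gamma>. m C))"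
  define jj where "jj = (\<lambda>(\<gamma>, Q). (\<Union>(insert (blk \<gamma> a) Q) - {a}, insert (blk \<gamma> a) Q, insert (blk \<gamma> b) (Ob \<gamma> - Q)))"
  define ii where "ii = (\<lambda>(A :: 'a set, \<alpha>1 :: 'a set set, \<alpha>2 :: 'a set set). (\<alpha>1 \<union> \<alpha>2, \<alpha>1 - {blk \<alpha>1 a}))"
  have finR: "finite R" using fin by (simp add: R_def)
  have finP: "finite {\<alpha>. partition_on X \<alpha>}" if "finite X" for X :: "'a set"
    using finitely_many_partition_on[OF that] .
  have "(\<Sum>A\<in>Pow R. Kc (insert a A) m * Kc (insert b (R - A)) m)
      = (\<Sum>A\<in>Pow R. \<Sum>p\<in>{\<alpha>. partition_on (insert a A) \<alpha>} \<times> {\<alpha>. partition_on (insert b (R - A)) \<alpha>}. h (A, p))"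
  proof (intro sum.cong refl)
    fix A assume "A \<in> Pow R"
    show "Kc (insert a A) m * Kc (insert b (R - A)) m
        = (\<Sum>p\<in>{\<alpha>. partition_on (insert a A) \<alpha>} \<times> {\<alpha>. partition_on (insert b (R - A)) \<alpha>}. h (A, p))"
      unfolding Kc_def sum_product sum.cartesian_product
      by (intro sum.cong refl) (auto simp: h_def algebra_simps)
  qed
  also have "\<dots> = sum h Tset"
    unfolding Tset_def
    by (subst sum.Sigma) (auto simp: finR finP finite_subset[OF _ finR] intro!: finite_cartesian_product)
  also have "\<dots> = sum g Sset"
  proof (rule sum.reindex_bij_witness[of Sset ii jj, symmetric])
    fix s assume s: "s \<in> Sset"
    obtain \<gamma> Q where sg: "s = (\<gamma>, Q)" by (cases s)
    have p: "partition_on S \<gamma>" and ne: "blk \<gamma> a \<noteq> blk \<gamma> b" and Q: "Q \<subseteq> \<gamma> - {blk \<gamma> a, blk \<gamma> b}"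
      using s by (auto simp: sg Sset_def Psep_def Ob_def)
    note T = T_of_S[OF p fin a b ne Q]
    show "ii (jj s) = s" using T(4,5,6) by (simp add: sg ii_def jj_def Ob_def insert_commute)
    show "jj s \<in> Tset" using T(1,2,3) by (simp add: sg Tset_def jj_def Ob_def R_def)
    show "h (jj s) = g s"
      using T(7,8) T(9)[of m] by (simp add: sg h_def g_def jj_def Ob_def)
  next
    fix t assume t: "t \<in> Tset"
    obtain A \<alpha>1 \<alpha>2 where tg: "t = (A, \<alpha>1, \<alpha>2)" by (cases t)
    have A: "A \<subseteq> S - {a, b}" and p1: "partition_on (insert a A) \<alpha>1"
      and p2: "partition_on (insert b (S - {a, b} - A)) \<alpha>2"
      using t by (auto simp: tg Tset_def R_def)
    note U = S_of_T[OF A a b ab p1 p2]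
    have "jj (ii t) = (\<Union>(insert (blk (\<alpha>1 \<union> \<alpha>2) a) (\<alpha>1 - {blk \<alpha>1 a})) - {a},
        insert (blk (\<alpha>1 \<union> \<alpha>2) a) (\<alpha>1 - {blk \<alpha>1 a}),
        insert (blk (\<alpha>1 \<union> \<alpha>2) b) ((\<alpha>1 \<union> \<alpha>2) - {blk (\<alpha>1 \<union> \<alpha>2) a, blk (\<alpha>1 \<union> \<alpha>2) b} - (\<alpha>1 - {blk \<alpha>1 a})))"
      by (simp only: tg ii_def jj_def Ob_def prod.case)
    also have "\<dots> = t" unfolding U(4) by (unfold U(5) U(6)) (simp add: tg)
    finally show "jj (ii t) = t" .
    show "ii t \<in> Sset" using U(1,2,3) by (simp add: tg ii_def Sset_def Psep_def Ob_def)
  qed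
  also have "\<dots> = (\<Sum>\<gamma>\<in>Psep. \<Sum>Q\<in>Pow (Ob \<gamma>). g (\<gamma>, Q))"
  proof -
    have "finite Psep" using finP[OF fin] by (rule finite_subset[rotated]) (auto simp: Psep_def)
    moreover have "finite (Pow (Ob \<gamma>))" if "\<gamma> \<in> Psep" for \<gamma>
      using that finite_elements[OF fin] by (auto simp: Psep_def Ob_def)
    ultimately show ?thesis unfolding Sset_def by (subst sum.Sigma) auto
  qed
  also have "\<dots> = (\<Sum>\<gamma>\<in>Psep. - (of_int (mu (card \<gamma>)) * (\<Prod>C\<in>\<gamma>. m C)))"
  proof (intro sum.cong refl)
    fix \<gamma> assume g: "\<gamma> \<in> Psep"
    then have p: "partition_on S \<gamma>" and ne: "blk \<gamma> a \<noteq> blk \<gamma> b" by (auto simp: Psep_def)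
    have fg: "finite \<gamma>" using finite_elements[OF fin p] .
    have mem: "blk \<gamma> a \<in> \<gamma>" "blk \<gamma> b \<in> \<gamma>" using blk_mem[OF p a] blk_mem[OF p b] by auto
    have cO: "card (Ob \<gamma>) + 2 = card \<gamma>"
    proof -
      have "card (Ob \<gamma>) = card \<gamma> - card {blk \<gamma> a, blk \<gamma> b}"
        unfolding Ob_def using mem by (intro card_Diff_subset) auto
      moreover have "card {blk \<gamma> a, blk \<gamma> b} = 2" using ne by simp
      moreover have "2 \<le> card \<gamma>" using mem ne fg
        by (metis \<open>card {blk \<gamma> a, blk \<gamma> b} = 2\<close> card_mono empty_subsetI insert_subset)
      ultimately show ?thesis by simp
    qed
    have fO: "finite (Ob \<gamma>)" using fg by (simp add: Ob_def)
    have "(\<Sum>Q\<in>Pow (Ob \<gamma>). g (\<gamma>, Q))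
        = of_int (\<Sum>Q\<in>Pow (Ob \<gamma>). mu (card Q + 1) * mu (card (Ob \<gamma>) - card Q + 1)) * (\<Prod>C\<in>\<gamma>. m C)"
      by (simp add: g_def sum_distrib_right)
    also have "\<dots> = of_int (- mu (card (Ob \<gamma>) + 2)) * (\<Prod>C\<in>\<gamma>. m C)"
      by (simp only: mu_sum[OF fO])
    finally show "(\<Sum>Q\<in>Pow (Ob \<gamma>). g (\<gamma>, Q)) = - (of_int (mu (card \<gamma>)) * (\<Prod>C\<in>\<gamma>. m C))"
      using cO by simp
  qed
  also have "\<dots> = - (\<Sum>\<gamma>\<in>Psep. of_int (mu (card \<gamma>)) * (\<Prod>C\<in>\<gamma>. m C))"
    by (simp add: sum_negf)
  finally show ?thesis unfolding R_def Psep_def .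
qed

lemma core:
  fixes m :: "'a set \<Rightarrow> 'r::comm_ring_1"
  assumes fin: "finite S" and a: "a \<in> S" and b: "b \<in> S" and ab: "a \<noteq> b"
  shows "Kc (S - {a}) (\<lambda>D. m (if b \<in> D then insert a D else D))
    = Kc S m + (\<Sum>A\<in>Pow (S - {a, b}). Kc (insert a A) m * Kc (insert b (S - {a, b} - A)) m)"
proof -
  let ?f = "\<lambda>\<gamma>. of_int (mu (card \<gamma>)) * (\<Prod>C\<in>\<gamma>. m C)"
  have "Kc S m = (\<Sum>\<gamma>\<in>{\<gamma>. partition_on S \<gamma>} \<inter> {\<gamma>. blk \<gamma> a = blk \<gamma> b}. ?f \<gamma>)
      + (\<Sum>\<gamma>\<in>{\<gamma>. partition_on S \<gamma>} - {\<gamma>. blk \<gamma> a = blk \<gamma> b}. ?f \<gamma>)"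
    unfolding Kc_def by (rule sum.Int_Diff) (rule finitely_many_partition_on[OF fin])
  also have "{\<gamma>. partition_on S \<gamma>} \<inter> {\<gamma>. blk \<gamma> a = blk \<gamma> b} = {\<gamma>. partition_on S \<gamma> \<and> blk \<gamma> a = blk \<gamma> b}" by auto
  also have "{\<gamma>. partition_on S \<gamma>} - {\<gamma>. blk \<gamma> a = blk \<gamma> b} = {\<gamma>. partition_on S \<gamma> \<and> blk \<gamma> a \<noteq> blk \<gamma> b}" by auto
  finally show ?thesis
    using merge_part[OF assms, of m] split_part[OF assms, of m] by simp
qed


lemma Rep_ser_mult: "Rep_ser (x * y) = odot (Rep_ser x) (Rep_ser y)"
  by (simp add: times_ser_def Abs_ser_inverse)

lemma connprod_list:
  assumes d: "distinct ys"
  shows "connprod (map g ys) = Rep_ser (Kc (set ys) (\<lambda>D. Abs_ser (\<lambda>l. \<Prod>d\<in>D. g d l)))"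
proof (rule connprod_relabel)
  show "bij_betw (\<lambda>c. ys ! (c - 1)) {1..length (map g ys)} (set ys)"
    unfolding bij_betw_def
  proof
    show "inj_on (\<lambda>c. ys ! (c - 1)) {1..length (map g ys)}"
    proof (rule inj_onI)
      fix c c' assume c: "c \<in> {1..length (map g ys)}" and c': "c' \<in> {1..length (map g ys)}"
        and e: "ys ! (c - 1) = ys ! (c' - 1)"
      then have "c - 1 = c' - 1" using nth_eq_iff_index_eq[OF d, of "c - 1" "c' - 1"] by auto
      then show "c = c'" using c c' by auto
    qed
    show "(\<lambda>c. ys ! (c - 1)) ` {1..length (map g ys)} = set ys"
    proof
      show "(\<lambda>c. ys ! (c - 1)) ` {1..length (map g ys)} \<subseteq> set ys" by auto
      show "set ys \<subseteq> (\<lambda>c. ys ! (c - 1)) ` {1..length (map g ys)}"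
      proof
        fix x assume "x \<in> set ys"
        then obtain i where i: "i < length ys" "ys ! i = x" by (auto simp: in_set_conv_nth)
        then have "Suc i \<in> {1..length (map g ys)}" "ys ! (Suc i - 1) = x" by auto
        then show "x \<in> (\<lambda>c. ys ! (c - 1)) ` {1..length (map g ys)}" by (metis image_eqI)
      qed
    qed
  qed
  show "\<And>c. c \<in> {1..length (map g ys)} \<Longrightarrow> map g ys ! (c - 1) = g (ys ! (c - 1))" by auto
qed

theorem proposition3p2p7:
  fixes n :: nat and f :: "nat \<Rightarrow> partition \<Rightarrow> rat"
  assumes "n \<ge> 2"
  shows "connprod ((\<lambda>l. f 1 l * f 2 l) # map f [3..<n+1]) =
    (\<lambda>l. connprod (map f [1..<n+1]) l +
      (\<Sum>A\<in>Pow {3..n}.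
         odot (connprod (f 1 # map f (sorted_list_of_set A)))
              (connprod (f 2 # map f (sorted_list_of_set ({3..n} - A)))) l))"
proof -
  define M where "M D = Abs_ser (\<lambda>l. \<Prod>d\<in>D. f d l)" for D
  define g where "g d = (if d = 2 then (\<lambda>l. f 1 l * f 2 l) else f d)" for d
  have n: "2 \<le> n" using assms .
  have L1: "(\<lambda>l. f 1 l * f 2 l) # map f [3..<n+1] = map g [2..<n+1]"
  proof -
    have "[2..<n+1] = 2 # [3..<n+1]" using n by (simp add: upt_conv_Cons)
    moreover have "map f [3..<n+1] = map g [3..<n+1]" by (auto simp: g_def)
    ultimately show ?thesis by (simp add: g_def)
  qed
  have set2: "set [2..<n+1] = {2..n}" by auto
  have c1: "connprod ((\<lambda>l. f 1 l * f 2 l) # map f [3..<n+1])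
      = Rep_ser (Kc {2..n} (\<lambda>D. Abs_ser (\<lambda>l. \<Prod>d\<in>D. g d l)))"
    unfolding L1 using connprod_list[of "[2..<n+1]" g] set2 by simp
  have K1: "Kc {2..n} (\<lambda>D. Abs_ser (\<lambda>l. \<Prod>d\<in>D. g d l))
      = Kc ({1..n} - {1}) (\<lambda>D. M (if 2 \<in> D then insert 1 D else D))"
  proof -
    have e: "{1..n} - {1} = {2..n}" by auto
    show ?thesis unfolding e
    proof (rule Kc_cong)
      fix D assume D: "D \<subseteq> {2..n}"
      have "(\<lambda>l. \<Prod>d\<in>D. g d l) = (\<lambda>l. \<Prod>d\<in>(if 2 \<in> D then insert 1 D else D). f d l)"
      proof
        fix l
        have fD: "finite D" using D finite_subset by blast
        have one: "1 \<notin> D" using D by auto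
        show "(\<Prod>d\<in>D. g d l) = (\<Prod>d\<in>(if 2 \<in> D then insert 1 D else D). f d l)"
        proof (cases "2 \<in> D")
          case True
          have "(\<Prod>d\<in>D. g d l) = g 2 l * (\<Prod>d\<in>D - {2}. g d l)"
            using True fD by (simp add: prod.remove)
          also have "(\<Prod>d\<in>D - {2}. g d l) = (\<Prod>d\<in>D - {2}. f d l)"
            by (rule prod.cong) (auto simp: g_def)
          also have "g 2 l * (\<Prod>d\<in>D - {2}. f d l) = f 1 l * (f 2 l * (\<Prod>d\<in>D - {2}. f d l))"
            by (simp add: g_def)
          also have "f 2 l * (\<Prod>d\<in>D - {2}. f d l) = (\<Prod>d\<in>D. f d l)"
            using True fD by (simp add: prod.remove)
          also have "f 1 l * (\<Prod>d\<in>D. f d l) = (\<Prod>d\<in>insert 1 D. f d l)"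
            using one fD by simp
          finally show ?thesis using True by simp
        next
          case False
          then show ?thesis by (auto simp: g_def intro!: prod.cong)
        qed
      qed
      then show "Abs_ser (\<lambda>l. \<Prod>d\<in>D. g d l) = M (if 2 \<in> D then insert 1 D else D)"
        by (simp add: M_def)
    qed
  qed
  have core1: "Kc ({1..n} - {1}) (\<lambda>D. M (if 2 \<in> D then insert 1 D else D))
      = Kc {1..n} M + (\<Sum>A\<in>Pow ({1..n} - {1, 2}). Kc (insert 1 A) M * Kc (insert 2 ({1..n} - {1, 2} - A)) M)"
    by (rule core) (use n in auto)
  have e12: "{1..n} - {1, 2} = {3..n}" by auto
  have c2: "connprod (map f [1..<n+1]) = Rep_ser (Kc {1..n} M)"
  proof -
    have set1: "set [1..<n+1] = {1..n}" by auto
    have "connprod (map f [1..<n+1]) = Rep_ser (Kc (set [1..<n+1]) (\<lambda>D. Abs_ser (\<lambda>l. \<Prod>d\<in>D. f d l)))"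
      by (rule connprod_list) simp
    then show ?thesis by (simp only: set1 M_def[abs_def])
  qed
  have c3: "connprod (f x # map f (sorted_list_of_set B)) = Rep_ser (Kc (insert x B) M)"
    if "B \<subseteq> {3..n}" "x \<in> {1, 2}" for B x
  proof -
    have fB: "finite B" using that(1) finite_subset by blast
    have xB: "x \<notin> B" using that by auto
    have "f x # map f (sorted_list_of_set B) = map f (x # sorted_list_of_set B)" by simp
    moreover have "distinct (x # sorted_list_of_set B)" using fB xB by simp
    moreover have "set (x # sorted_list_of_set B) = insert x B" using fB by simp
    ultimately show ?thesis using connprod_list[of "x # sorted_list_of_set B" f] by (simp add: M_def[abs_def])
  qed
  show ?thesis
  proof
    fix l
    have "connprod ((\<lambda>l. f 1 l * f 2 l) # map f [3..<n+1]) l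
        = Rep_ser (Kc {1..n} M + (\<Sum>A\<in>Pow {3..n}. Kc (insert 1 A) M * Kc (insert 2 ({3..n} - A)) M)) l"
      using c1 K1 core1 e12 by simp
    also have "\<dots> = Rep_ser (Kc {1..n} M) l + (\<Sum>A\<in>Pow {3..n}.
        odot (Rep_ser (Kc (insert 1 A) M)) (Rep_ser (Kc (insert 2 ({3..n} - A)) M)) l)"
      by (simp add: Rep_ser_add Rep_ser_sum Rep_ser_mult)
    also have "\<dots> = connprod (map f [1..<n+1]) l +
      (\<Sum>A\<in>Pow {3..n}.
         odot (connprod (f 1 # map f (sorted_list_of_set A)))
              (connprod (f 2 # map f (sorted_list_of_set ({3..n} - A)))) l)"
    proof -
      have "(\<Sum>A\<in>Pow {3..n}. odot (Rep_ser (Kc (insert 1 A) M)) (Rep_ser (Kc (insert 2 ({3..n} - A)) M)) l)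
          = (\<Sum>A\<in>Pow {3..n}. odot (connprod (f 1 # map f (sorted_list_of_set A)))
              (connprod (f 2 # map f (sorted_list_of_set ({3..n} - A)))) l)"
      proof (rule sum.cong[OF refl])
        fix A assume A: "A \<in> Pow {3..n}"
        have "connprod (f 1 # map f (sorted_list_of_set A)) = Rep_ser (Kc (insert 1 A) M)"
          using A by (intro c3) auto
        moreover have "connprod (f 2 # map f (sorted_list_of_set ({3..n} - A))) = Rep_ser (Kc (insert 2 ({3..n} - A)) M)"
          by (intro c3) auto
        ultimately show "odot (Rep_ser (Kc (insert 1 A) M)) (Rep_ser (Kc (insert 2 ({3..n} - A)) M)) l
            = odot (connprod (f 1 # map f (sorted_list_of_set A)))
              (connprod (f 2 # map f (sorted_list_of_set ({3..n} - A)))) l" by simp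
      qed
      then show ?thesis using c2 by simp
    qed
    finally show "connprod ((\<lambda>l. f 1 l * f 2 l) # map f [3..<n+1]) l = connprod (map f [1..<n+1]) l +
      (\<Sum>A\<in>Pow {3..n}.
         odot (connprod (f 1 # map f (sorted_list_of_set A)))
              (connprod (f 2 # map f (sorted_list_of_set ({3..n} - A)))) l)" .
  qed
qed
end
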